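(* Let $A$ be a vector space with multiplications $\circ_A,\vdash_A,\dashv_A$, and let $\widehat A=A\otimes\mathbb K[t,t^{-1}]$ with the multiplication $$(x\otimes t^i)\cdot(y\otimes t^j)=x\circ_A y\otimes t^{i+j}+(i\,x\vdash_A y-j\,y\dashv_A x)\otimes t^{i+j-1},\quad x,y\in A,\ i,j\in\mathbb Z.$$ Then $(\widehat A,\cdot)$ is a Leibniz algebra if and only if $(A,\circ_A,\vdash_A,\dashv_A)$ is a Gel'fand–Dorfman dialgebra.
   Context: All vector spaces are over a field $\mathbb K$ of characteristic zero ($\widehat A$ may be infinite-dimensional). A Leibniz algebra is a vector space with multiplication $\circ$ satisfying $x\circ(y\circ z)=(x\circ y)\circ z+y\circ(x\circ z)$. A Novikov dialgebra is $(A,\vdash_A,\dashv_A)$ satisfying for all $x,y,z$: (ND1) $x\vdash_A(y\vdash_A z)=(x\vdash_A y)\vdash_A z-(y\dashv_A x)\vdash_A z+y\vdash_A(x\vdash_A z)$; (ND2) $(y\vdash_A z)\dashv_A x=y\vdash_A(z\dashv_A x)-z\dashv_A(y\vdash_A x)+(z\dashv_A y)\dashv_A x$; (ND3) $z\dashv_A(x\vdash_A y)=z\dashv_A(x\dashv_A y)$; (ND4) $(z\dashv_A y)\dashv_A x=(z\dashv_A x)\dashv_A y$; (ND5) $(y\dashv_A x)\vdash_A z=(y\vdash_A z)\dashv_A x=(y\vdash_A x)\vdash_A z$. A Gel'fand–Dorfman dialgebra is $(A,\circ_A,\vdash_A,\dashv_A)$ such that $(A,\circ_A)$ is a Leibniz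 algebra, $(A,\vdash_A,\dashv_A)$ is a Novikov dialgebra, and for all $x,y,z$: (GD1) $x\vdash_A(y\circ_A z)-(x\vdash_A y)\circ_A z-(x\circ_A y)\vdash_A z-y\circ_A(x\vdash_A z)+(x\circ_A z)\dashv_A y=0$; (GD2) $x\circ_A(y\vdash_A z)-(y\circ_A z)\dashv_A x+(y\dashv_A x)\circ_A z-(x\circ_A y)\vdash_A z-y\vdash_A(x\circ_A z)=0$; (GD3) $x\circ_A(z\dashv_A y)+(y\circ_A z)\dashv_A x-z\dashv_A(x\circ_A y)-y\circ_A(z\dashv_A x)-(x\circ_A z)\dashv_A y=0$. *)

theory Defs
  imports Complex_Main
begin

text \<open>The hat algebra A tensor K[t,t^-1] is modelled as
  finitely supported functions int => 'a (the coefficient of t^n is f n).\<close>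

definition bilinear_op :: "('k::field \<Rightarrow> 'a::ab_group_add \<Rightarrow> 'a) \<Rightarrow> ('a \<Rightarrow> 'a \<Rightarrow> 'a) \<Rightarrow> bool" where
  "bilinear_op scale m \<longleftrightarrow>
     (\<forall>x. Vector_Spaces.linear scale scale (\<lambda>y. m x y)) \<and>
     (\<forall>y. Vector_Spaces.linear scale scale (\<lambda>x. m x y))"

definition leibniz_alg :: "('a \<Rightarrow> 'a \<Rightarrow> 'a::ab_group_add) \<Rightarrow> bool" where
  "leibniz_alg m \<longleftrightarrow> (\<forall>x y z. m x (m y z) = m (m x y) z + m y (m x z))"

text \<open>l is the left product (turnstile), r the right product (dashv).\<close>
definition novikov_dialg :: "('a \<Rightarrow> 'a \<Rightarrow> 'a::ab_group_add) \<Rightarrow> ('a \<Rightarrow> 'a \<Rightarrow> 'a) \<Rightarrow> bool" where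
  "novikov_dialg l r \<longleftrightarrow> (\<forall>x y z.
     l x (l y z) = l (l x y) z - l (r y x) z + l y (l x z) \<and>
     r (l y z) x = l y (r z x) - r z (l y x) + r (r z y) x \<and>
     r z (l x y) = r z (r x y) \<and>
     r (r z y) x = r (r z x) y \<and>
     l (r y x) z = r (l y z) x \<and>
     r (l y z) x = l (l y x) z)"

definition gd_dialg :: "('a \<Rightarrow> 'a \<Rightarrow> 'a::ab_group_add) \<Rightarrow> ('a \<Rightarrow> 'a \<Rightarrow> 'a) \<Rightarrow> ('a \<Rightarrow> 'a \<Rightarrow> 'a) \<Rightarrow> bool" where
  "gd_dialg c l r \<longleftrightarrow> leibniz_alg c \<and> novikov_dialg l r \<and> (\<forall>x y z.
     l x (c y z) - c (l x y) z - l (c x y) z - c y (l x z) + r (c x z) y = 0 \<and>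
     c x (l y z) - r (c y z) x + c (r y x) z - l (c x y) z - l y (c x z) = 0 \<and>
     c x (r z y) + r (c y z) x - r z (c x y) - c y (r z x) - r (c x z) y = 0)"

definition supp_int :: "(int \<Rightarrow> 'a::zero) \<Rightarrow> int set" where
  "supp_int f = {i. f i \<noteq> 0}"

text \<open>Bilinear extension of
  (x t^i).(y t^j) = (x o y) t^(i+j) + (i x |- y - j y -| x) t^(i+j-1).\<close>
definition hat_mult :: "('k::field \<Rightarrow> 'a::ab_group_add \<Rightarrow> 'a) \<Rightarrow> ('a \<Rightarrow> 'a \<Rightarrow> 'a) \<Rightarrow> ('a \<Rightarrow> 'a \<Rightarrow> 'a)
    \<Rightarrow> ('a \<Rightarrow> 'a \<Rightarrow> 'a) \<Rightarrow> (int \<Rightarrow> 'a) \<Rightarrow> (int \<Rightarrow> 'a) \<Rightarrow> (int \<Rightarrow> 'a)" where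
  "hat_mult scale c l r f g = (\<lambda>n. \<Sum>i\<in>supp_int f. \<Sum>j\<in>supp_int g.
      (if i + j = n then c (f i) (g j) else 0) +
      (if i + j - 1 = n then scale (of_int i) (l (f i) (g j)) - scale (of_int j) (r (g j) (f i)) else 0))"

definition hat_is_leibniz :: "('k::field \<Rightarrow> 'a::ab_group_add \<Rightarrow> 'a) \<Rightarrow> ('a \<Rightarrow> 'a \<Rightarrow> 'a) \<Rightarrow> ('a \<Rightarrow> 'a \<Rightarrow> 'a)
    \<Rightarrow> ('a \<Rightarrow> 'a \<Rightarrow> 'a) \<Rightarrow> bool" where
  "hat_is_leibniz scale c l r \<longleftrightarrow>
     (\<forall>f g h. finite (supp_int f) \<and> finite (supp_int g) \<and> finite (supp_int h) \<longrightarrow>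
        (let m = hat_mult scale c l r in
           \<forall>n. m f (m g h) n = m (m f g) h n + m g (m f h) n))"

end

theory Submission
  imports Defs "HOL-Library.Function_Algebras"
begin

locale hatctx = vector_space scale for scale :: "'k::field_char_0 \<Rightarrow> 'a::ab_group_add \<Rightarrow> 'a" +
  fixes c l r :: "'a \<Rightarrow> 'a \<Rightarrow> 'a"
  assumes bc: "bilinear_op scale c" and bl: "bilinear_op scale l" and br: "bilinear_op scale r"
begin

lemma lin_parts:
  assumes "bilinear_op scale m"
  shows "m (x + y) z = m x z + m y z" "m x (y + z) = m x y + m x z"
    "m (scale a x) z = scale a (m x z)" "m x (scale a z) = scale a (m x z)"
proof -
  have A: "module_hom scale scale (\<lambda>x. m x z)" "module_hom scale scale (\<lambda>y. m x y)" for x z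
    using assms unfolding bilinear_op_def module_hom_iff_linear by auto
  show "m (x + y) z = m x z + m y z" using module_hom.add[OF A(1)] .
  show "m x (y + z) = m x y + m x z" using module_hom.add[OF A(2)] .
  show "m (scale a x) z = scale a (m x z)" using module_hom.scale[OF A(1)] .
  show "m x (scale a z) = scale a (m x z)" using module_hom.scale[OF A(2)] .
qed

lemma lin_more:
  assumes "bilinear_op scale m"
  shows "m (x - y) z = m x z - m y z" "m x (y - z) = m x y - m x z"
    "m 0 z = 0" "m x 0 = 0" "m (- x) z = - m x z" "m x (- z) = - m x z"
proof -
  have A: "module_hom scale scale (\<lambda>x. m x z)" "module_hom scale scale (\<lambda>y. m x y)"
    using assms unfolding bilinear_op_def module_hom_iff_linear by auto
  show "m (x - y) z = m x z - m y z" using module_hom.diff[OF A(1)] .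
  show "m 0 z = 0" using module_hom.zero[OF A(1)] .
  show "m (- x) z = - m x z" using module_hom.neg[OF A(1)] .
  show "m x (y - z) = m x y - m x z" using module_hom.diff[OF A(2)] .
  show "m x 0 = 0" using module_hom.zero[OF A(2)] .
  show "m x (- z) = - m x z" using module_hom.neg[OF A(2)] .
qed

lemmas bil = lin_parts[OF bc] lin_parts[OF bl] lin_parts[OF br]
   lin_more[OF bc] lin_more[OF bl] lin_more[OF br]

abbreviation sc :: "int \<Rightarrow> 'a \<Rightarrow> 'a" where "sc i \<equiv> scale (of_int i)"

definition E1 :: "int \<Rightarrow> int \<Rightarrow> int \<Rightarrow> 'a \<Rightarrow> 'a \<Rightarrow> 'a \<Rightarrow> 'a" where
 "E1 i j k x y z = (sc i (l x (c y z)) - sc (j+k) (r (c y z) x) + c x (sc j (l y z) - sc k (r z y)))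
   - ((sc (i+j) (l (c x y) z) - sc k (r z (c x y)) + c (sc i (l x y) - sc j (r y x)) z)
     + (sc j (l y (c x z)) - sc (i+k) (r (c x z) y) + c y (sc i (l x z) - sc k (r z x))))"

definition E2 :: "int \<Rightarrow> int \<Rightarrow> int \<Rightarrow> 'a \<Rightarrow> 'a \<Rightarrow> 'a \<Rightarrow> 'a" where
 "E2 i j k x y z = (sc i (l x (sc j (l y z) - sc k (r z y))) - sc (j+k-1) (r (sc j (l y z) - sc k (r z y)) x))
   - ((sc (i+j-1) (l (sc i (l x y) - sc j (r y x)) z) - sc k (r z (sc i (l x y) - sc j (r y x))))
     + (sc j (l y (sc i (l x z) - sc k (r z x))) - sc (i+k-1) (r (sc i (l x z) - sc k (r z x)) y)))"

definition G1 where "G1 x y z = l x (c y z) - c (l x y) z - l (c x y) z - c y (l x z) + r (c x z) y"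
definition G2 where "G2 x y z = c x (l y z) - r (c y z) x + c (r y x) z - l (c x y) z - l y (c x z)"
definition G3 where "G3 x y z = c x (r z y) + r (c y z) x - r z (c x y) - c y (r z x) - r (c x z) y"

lemma E1_expand: "E1 i j k x y z = sc i (G1 x y z) + sc j (G2 x y z) - sc k (G3 x y z)"
  unfolding E1_def G1_def G2_def G3_def
  by (simp add: bil algebra_simps)

definition N1 where "N1 x y z = l x (l y z) - l (l x y) z + l (r y x) z - l y (l x z)"
definition N2 where "N2 x y z = r (l x z) y - l x (r z y) + r z (l x y) - r (r z x) y"
definition N3 where "N3 x y z = l (r y x) z - r (l y z) x"
definition N4 where "N4 x y z = r (r z y) x - r (r z x) y"
definition N5 where "N5 x y z = r (l x z) y - l (l x y) z"
definition N6 where "N6 x y z = r (r z y) x - r z (r y x) + l y (r z x) - r (l y z) x"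

lemma E2_expand: "E2 i j k x y z = sc (i*j) (N1 x y z) + sc (i*k) (N2 x y z) + sc (j*(j-1)) (N3 x y z)
   + sc (k*(k-1)) (N4 x y z) + sc (i*(i-1)) (N5 x y z) + sc (j*k) (N6 x y z)"
  unfolding E2_def N1_def N2_def N3_def N4_def N5_def N6_def
  by (simp add: bil algebra_simps)

lemma nov_iff: "novikov_dialg l r \<longleftrightarrow> (\<forall>x y z. N1 x y z = 0 \<and> N2 x y z = 0 \<and> N3 x y z = 0
   \<and> N4 x y z = 0 \<and> N5 x y z = 0 \<and> N6 x y z = 0)"
proof
  assume H: "novikov_dialg l r"
  show "\<forall>x y z. N1 x y z = 0 \<and> N2 x y z = 0 \<and> N3 x y z = 0 \<and> N4 x y z = 0 \<and> N5 x y z = 0 \<and> N6 x y z = 0"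
  proof (intro allI conjI)
    fix x y z
    note h = H[unfolded novikov_dialg_def, rule_format]
    have e1: "l x (l y z) = l (l x y) z - l (r y x) z + l y (l x z)" using h[of x y z] by blast
    have e2: "r (l x z) y = l x (r z y) - r z (l x y) + r (r z x) y" using h[of y x z] by blast
    have e3: "l (r y x) z = r (l y z) x" using h[of x y z] by blast
    have e4: "r (r z y) x = r (r z x) y" using h[of x y z] by blast
    have e5: "r (l x z) y = l (l x y) z" using h[of y x z] by blast
    have e6: "r (l y z) x = l y (r z x) - r z (l y x) + r (r z y) x" using h[of x y z] by blast
    have e7: "r z (l y x) = r z (r y x)" using h[of y x z] by blast
    show "N1 x y z = 0" unfolding N1_def e1 by (simp add: algebra_simps)
    show "N2 x y z = 0" unfolding N2_def e2 by (simp add: algebra_simps)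
    show "N3 x y z = 0" unfolding N3_def e3 by (simp add: algebra_simps)
    show "N4 x y z = 0" unfolding N4_def e4 by (simp add: algebra_simps)
    show "N5 x y z = 0" unfolding N5_def e5 by (simp add: algebra_simps)
    show "N6 x y z = 0" unfolding N6_def e6 e7 by (simp add: algebra_simps)
  qed
next
  assume H: "\<forall>x y z. N1 x y z = 0 \<and> N2 x y z = 0 \<and> N3 x y z = 0 \<and> N4 x y z = 0 \<and> N5 x y z = 0 \<and> N6 x y z = 0"
  show "novikov_dialg l r" unfolding novikov_dialg_def
  proof (intro allI conjI)
    fix x y z
    note h = H[rule_format]
    show "l x (l y z) = l (l x y) z - l (r y x) z + l y (l x z)"
      using h[of x y z] by (simp add: N1_def algebra_simps)
    show "r (l y z) x = l y (r z x) - r z (l y x) + r (r z y) x"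
      using h[of y x z] by (simp add: N2_def algebra_simps)
    show "r z (l x y) = r z (r x y)"
      using h[of x y z] h[of y x z] by (simp add: N2_def N6_def algebra_simps)
    show "r (r z y) x = r (r z x) y"
      using h[of x y z] by (simp add: N4_def algebra_simps)
    show "l (r y x) z = r (l y z) x"
      using h[of x y z] by (simp add: N3_def algebra_simps)
    show "r (l y z) x = l (l y x) z"
      using h[of y x z] by (simp add: N5_def algebra_simps)
  qed
qed

lemma gd_iff: "gd_dialg c l r \<longleftrightarrow> leibniz_alg c \<and> novikov_dialg l r \<and>
   (\<forall>x y z. G1 x y z = 0 \<and> G2 x y z = 0 \<and> G3 x y z = 0)"
  unfolding gd_dialg_def G1_def G2_def G3_def by simp

abbreviation m where "m \<equiv> hat_mult scale c l r"

definition F :: "int \<Rightarrow> int \<Rightarrow> 'a \<Rightarrow> 'a \<Rightarrow> int \<Rightarrow> 'a" where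
  "F i j a b n = (if i + j = n then c a b else 0) +
      (if i + j - 1 = n then sc i (l a b) - sc j (r b a) else 0)"

lemma F0: "F i j 0 b n = 0" "F i j a 0 n = 0"
  unfolding F_def by (simp_all add: bil)

lemma F_add: "F i j (a + a') b n = F i j a b n + F i j a' b n"
   "F i j a (b + b') n = F i j a b n + F i j a b' n"
  unfolding F_def by (auto simp add: bil algebra_simps)

lemma hm_sum:
  assumes "finite S" "finite T" "supp_int f \<subseteq> S" "supp_int g \<subseteq> T"
  shows "m f g n = (\<Sum>i\<in>S. \<Sum>j\<in>T. F i j (f i) (g j) n)"
proof -
  have "m f g n = (\<Sum>i\<in>supp_int f. \<Sum>j\<in>supp_int g. F i j (f i) (g j) n)"
    unfolding hat_mult_def F_def by simp
  also have "\<dots> = (\<Sum>i\<in>supp_int f. \<Sum>j\<in>T. F i j (f i) (g j) n)"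
    apply (rule sum.cong[OF refl])
    apply (rule sum.mono_neutral_left)
    using assms by (auto simp: supp_int_def F0)
  also have "\<dots> = (\<Sum>i\<in>S. \<Sum>j\<in>T. F i j (f i) (g j) n)"
    apply (rule sum.mono_neutral_left)
    using assms by (auto simp: supp_int_def F0)
  finally show ?thesis .
qed

lemma supp_add: "supp_int ((f::int \<Rightarrow> 'a) + g) \<subseteq> supp_int f \<union> supp_int g"
  by (auto simp: supp_int_def plus_fun_def)

lemma finite_supp_add: "finite (supp_int f) \<Longrightarrow> finite (supp_int g) \<Longrightarrow> finite (supp_int ((f::int \<Rightarrow> 'a) + g))"
  by (meson finite_UnI finite_subset supp_add)

lemma hm_add_left:
  assumes "finite (supp_int f1)" "finite (supp_int f2)" "finite (supp_int g)"
  shows "m (f1 + f2) g = m f1 g + m f2 g"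
proof
  fix n
  let ?S = "supp_int f1 \<union> supp_int f2"
  have "m (f1 + f2) g n = (\<Sum>i\<in>?S. \<Sum>j\<in>supp_int g. F i j ((f1+f2) i) (g j) n)"
    by (rule hm_sum) (use assms supp_add in auto)
  also have "\<dots> = (\<Sum>i\<in>?S. \<Sum>j\<in>supp_int g. F i j (f1 i) (g j) n)
      + (\<Sum>i\<in>?S. \<Sum>j\<in>supp_int g. F i j (f2 i) (g j) n)"
    by (simp add: F_add sum.distrib)
  also have "\<dots> = m f1 g n + m f2 g n"
    using assms by (simp add: hm_sum[of ?S "supp_int g"])
  finally show "m (f1 + f2) g n = (m f1 g + m f2 g) n" by simp
qed

lemma hm_add_right:
  assumes "finite (supp_int f)" "finite (supp_int g1)" "finite (supp_int g2)"
  shows "m f (g1 + g2) = m f g1 + m f g2"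
proof
  fix n
  let ?T = "supp_int g1 \<union> supp_int g2"
  have "m f (g1 + g2) n = (\<Sum>i\<in>supp_int f. \<Sum>j\<in>?T. F i j (f i) ((g1+g2) j) n)"
    by (rule hm_sum) (use assms supp_add in auto)
  also have "\<dots> = (\<Sum>i\<in>supp_int f. \<Sum>j\<in>?T. F i j (f i) (g1 j) n)
      + (\<Sum>i\<in>supp_int f. \<Sum>j\<in>?T. F i j (f i) (g2 j) n)"
    by (simp add: F_add sum.distrib)
  also have "\<dots> = m f g1 n + m f g2 n"
    using assms by (simp add: hm_sum[of "supp_int f" ?T])
  finally show "m f (g1 + g2) n = (m f g1 + m f g2) n" by simp
qed

lemma hm_zero: "m 0 g = 0" "m f 0 = 0"
  by (auto simp: hat_mult_def supp_int_def)

lemma hm_finite: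
  assumes "finite (supp_int f)" "finite (supp_int g)"
  shows "finite (supp_int (m f g))"
proof -
  let ?P = "supp_int f \<times> supp_int g"
  have "supp_int (m f g) \<subseteq> (\<lambda>(i,j). i + j) ` ?P \<union> (\<lambda>(i,j). i + j - 1) ` ?P"
  proof
    fix n assume n: "n \<in> supp_int (m f g)"
    show "n \<in> (\<lambda>(i,j). i + j) ` ?P \<union> (\<lambda>(i,j). i + j - 1) ` ?P"
    proof (rule ccontr)
      assume nn: "n \<notin> (\<lambda>(i,j). i + j) ` ?P \<union> (\<lambda>(i,j). i + j - 1) ` ?P"
      have "m f g n = 0" unfolding hat_mult_def
      proof (rule sum.neutral, rule ballI, rule sum.neutral, rule ballI)
        fix i j assume ij: "i \<in> supp_int f" "j \<in> supp_int g"
        have "i + j \<noteq> n" "i + j - 1 \<noteq> n" using nn ij by force+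
        then show "(if i + j = n then c (f i) (g j) else 0) +
          (if i + j - 1 = n then sc i (l (f i) (g j)) - sc j (r (g j) (f i)) else 0) = 0" by simp
      qed
      with n show False by (simp add: supp_int_def)
    qed
  qed
  moreover have "finite ((\<lambda>(i,j). i + j) ` ?P \<union> (\<lambda>(i,j). i + j - 1) ` ?P)"
    using assms by simp
  ultimately show ?thesis by (rule finite_subset)
qed

definition mon :: "'a \<Rightarrow> int \<Rightarrow> int \<Rightarrow> 'a" where "mon x i = (\<lambda>n. if n = i then x else 0)"

lemma mon_supp: "supp_int (mon x i) \<subseteq> {i}" and mon_fin: "finite (supp_int (mon x i))"
  by (auto simp: mon_def supp_int_def intro: finite_subset[of _ "{i}"])

lemma mon_prod: "m (mon x i) (mon y j) = mon (c x y) (i + j) + mon (sc i (l x y) - sc j (r y x)) (i + j - 1)"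
proof
  fix n
  have "m (mon x i) (mon y j) n = (\<Sum>i'\<in>{i}. \<Sum>j'\<in>{j}. F i' j' (mon x i i') (mon y j j') n)"
    by (rule hm_sum) (auto simp: mon_supp)
  then show "m (mon x i) (mon y j) n = (mon (c x y) (i + j) + mon (sc i (l x y) - sc j (r y x)) (i + j - 1)) n"
    by (simp add: F_def mon_def)
qed

lemma mon_add: "mon a p + mon b p = mon (a + b) p"
  by (auto simp: mon_def)

definition E0 where "E0 x y z = c x (c y z) - (c (c x y) z + c y (c x z))"

lemma mon_eval: "mon a p n = (if n = p then a else 0)" by (simp add: mon_def)

lemma triple:
  "m (mon x i) (m (mon y j) (mon z k)) =
     mon (c x (c y z)) (i+j+k) + mon (sc i (l x (c y z)) - sc (j+k) (r (c y z) x)) (i+j+k-1)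
   + mon (c x (sc j (l y z) - sc k (r z y))) (i+j+k-1)
   + mon (sc i (l x (sc j (l y z) - sc k (r z y))) - sc (j+k-1) (r (sc j (l y z) - sc k (r z y)) x)) (i+j+k-2)"
  by (simp add: mon_prod hm_add_right mon_fin add.assoc add_diff_eq)

lemma triple2:
  "m (m (mon x i) (mon y j)) (mon z k) =
     mon (c (c x y) z) (i+j+k) + mon (sc (i+j) (l (c x y) z) - sc k (r z (c x y))) (i+j+k-1)
   + mon (c (sc i (l x y) - sc j (r y x)) z) (i+j+k-1)
   + mon (sc (i+j-1) (l (sc i (l x y) - sc j (r y x)) z) - sc k (r z (sc i (l x y) - sc j (r y x)))) (i+j+k-2)"
proof -
  have e: "i + j - 1 + k = i + j + k - 1" "i + j - 1 + k - 1 = i + j + k - 2" by simp_all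
  show ?thesis by (simp add: mon_prod hm_add_left mon_fin add.assoc add_diff_eq e)
qed

lemma mon_leib:
  "m (mon x i) (m (mon y j) (mon z k)) n =
     (m (m (mon x i) (mon y j)) (mon z k) + m (mon y j) (m (mon x i) (mon z k))) n \<longleftrightarrow>
   ((n = i+j+k \<longrightarrow> E0 x y z = 0) \<and> (n = i+j+k-1 \<longrightarrow> E1 i j k x y z = 0)
     \<and> (n = i+j+k-2 \<longrightarrow> E2 i j k x y z = 0))"
proof -
  have t3: "m (mon y j) (m (mon x i) (mon z k)) =
     mon (c y (c x z)) (i+j+k) + mon (sc j (l y (c x z)) - sc (i+k) (r (c x z) y)) (i+j+k-1)
   + mon (c y (sc i (l x z) - sc k (r z x))) (i+j+k-1)
   + mon (sc j (l y (sc i (l x z) - sc k (r z x))) - sc (i+k-1) (r (sc i (l x z) - sc k (r z x)) y)) (i+j+k-2)"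
    using triple[of y j x i z k] by (simp add: algebra_simps)
  show ?thesis
  proof -
    consider "n = i+j+k" | "n = i+j+k-1" | "n = i+j+k-2" | "n \<noteq> i+j+k" "n \<noteq> i+j+k-1" "n \<noteq> i+j+k-2"
      by blast
    then show ?thesis
    proof cases
      case 1 then show ?thesis by (simp add: triple triple2 t3 mon_eval E0_def)
    next
      case 2 then show ?thesis by (simp add: triple triple2 t3 mon_eval E1_def add.assoc)
    next
      case 3 then show ?thesis by (simp add: triple triple2 t3 mon_eval E2_def add.assoc)
    next
      case 4 then show ?thesis by (simp add: triple triple2 t3 mon_eval)
    qed
  qed
qed

lemma fs_induct:
  assumes "finite (supp_int f)" and "Q 0"
    and step: "\<And>g x i. finite (supp_int g) \<Longrightarrow> Q g \<Longrightarrow> Q (g + mon x i)"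
  shows "Q f"
proof -
  have "\<forall>f. supp_int f = S \<longrightarrow> Q f" if "finite S" for S
    using that
  proof (induction S rule: finite_induct)
    case empty
    show ?case
    proof (intro allI impI)
      fix f :: "int \<Rightarrow> 'a" assume "supp_int f = {}"
      then have "f = 0" by (auto simp: supp_int_def fun_eq_iff)
      then show "Q f" using \<open>Q 0\<close> by simp
    qed
  next
    case (insert i S)
    show ?case
    proof (intro allI impI)
      fix f :: "int \<Rightarrow> 'a" assume f: "supp_int f = insert i S"
      let ?g = "f(i := 0)"
      have sg: "supp_int ?g = S" using f insert.hyps by (auto simp: supp_int_def)
      have "Q ?g" using insert.IH sg by blast
      moreover have "finite (supp_int ?g)" using sg insert.hyps by simp
      ultimately have "Q (?g + mon (f i) i)" by (rule step[rotated])
      moreover have "?g + mon (f i) i = f" by (auto simp: mon_def fun_eq_iff)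
      ultimately show "Q f" by simp
    qed
  qed
  then show ?thesis using assms(1) by blast
qed

definition Leib where "Leib f g h \<longleftrightarrow> m f (m g h) = m (m f g) h + m g (m f h)"

lemma Leib_0: "Leib 0 g h" "Leib f 0 h" "Leib f g 0"
  by (simp_all add: Leib_def hm_zero)

lemma Leib_add1:
  assumes "finite (supp_int f1)" "finite (supp_int f2)" "finite (supp_int g)" "finite (supp_int h)"
    "Leib f1 g h" "Leib f2 g h"
  shows "Leib (f1 + f2) g h"
proof -
  note fin = assms(1-4) hm_finite[OF assms(3,4)] hm_finite[OF assms(1,3)] hm_finite[OF assms(2,3)]
    hm_finite[OF assms(1,4)] hm_finite[OF assms(2,4)]
  have e1: "m (f1 + f2) (m g h) = m f1 (m g h) + m f2 (m g h)" by (rule hm_add_left) (use fin in auto)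
  have e2: "m (m (f1 + f2) g) h = m (m f1 g) h + m (m f2 g) h"
    using fin by (simp add: hm_add_left)
  have e3: "m g (m (f1 + f2) h) = m g (m f1 h) + m g (m f2 h)"
    using fin by (simp add: hm_add_left hm_add_right)
  show ?thesis using assms(5,6) unfolding Leib_def e1 e2 e3 by (simp add: add_ac)
qed

lemma Leib_add2:
  assumes "finite (supp_int f)" "finite (supp_int g1)" "finite (supp_int g2)" "finite (supp_int h)"
    "Leib f g1 h" "Leib f g2 h"
  shows "Leib f (g1 + g2) h"
proof -
  note fin = assms(1-4) hm_finite[OF assms(2,4)] hm_finite[OF assms(3,4)] hm_finite[OF assms(1,2)]
    hm_finite[OF assms(1,3)] hm_finite[OF assms(1,4)]
  have e1: "m f (m (g1 + g2) h) = m f (m g1 h) + m f (m g2 h)"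
    using fin by (simp add: hm_add_left hm_add_right)
  have e2: "m (m f (g1 + g2)) h = m (m f g1) h + m (m f g2) h"
    using fin by (simp add: hm_add_left hm_add_right)
  have e3: "m (g1 + g2) (m f h) = m g1 (m f h) + m g2 (m f h)"
    using fin by (simp add: hm_add_left)
  show ?thesis using assms(5,6) unfolding Leib_def e1 e2 e3 by (simp add: add_ac)
qed

lemma Leib_add3:
  assumes "finite (supp_int f)" "finite (supp_int g)" "finite (supp_int h1)" "finite (supp_int h2)"
    "Leib f g h1" "Leib f g h2"
  shows "Leib f g (h1 + h2)"
proof -
  note fin = assms(1-4) hm_finite[OF assms(2,3)] hm_finite[OF assms(2,4)] hm_finite[OF assms(1,2)]
    hm_finite[OF assms(1,3)] hm_finite[OF assms(1,4)]
  have e1: "m f (m g (h1 + h2)) = m f (m g h1) + m f (m g h2)"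
    using fin by (simp add: hm_add_right)
  have e2: "m (m f g) (h1 + h2) = m (m f g) h1 + m (m f g) h2"
    using fin by (simp add: hm_add_right)
  have e3: "m g (m f (h1 + h2)) = m g (m f h1) + m g (m f h2)"
    using fin by (simp add: hm_add_right)
  show ?thesis using assms(5,6) unfolding Leib_def e1 e2 e3 by (simp add: add_ac)
qed

lemma Leib_all:
  assumes M: "\<And>x i y j z k. Leib (mon x i) (mon y j) (mon z k)"
    and fin: "finite (supp_int f)" "finite (supp_int g)" "finite (supp_int h)"
  shows "Leib f g h"
proof -
  have H: "Leib (mon x i) (mon y j) h" if "finite (supp_int h)" for x i y j h
    using that(1)
  proof (rule fs_induct)
    show "Leib (mon x i) (mon y j) 0" by (rule Leib_0)
  next
    fix g x' i' assume "finite (supp_int g)" "Leib (mon x i) (mon y j) g"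
    then show "Leib (mon x i) (mon y j) (g + mon x' i')" by (intro Leib_add3 M mon_fin)
  qed
  have G: "Leib (mon x i) g h" if "finite (supp_int g)" "finite (supp_int h)" for x i g h
    using that(1)
  proof (rule fs_induct)
    show "Leib (mon x i) 0 h" by (rule Leib_0)
  next
    fix g' x' i' assume "finite (supp_int g')" "Leib (mon x i) g' h"
    then show "Leib (mon x i) (g' + mon x' i') h" by (intro Leib_add2 H mon_fin that(2))
  qed
  show ?thesis
    using fin(1)
  proof (rule fs_induct)
    show "Leib 0 g h" by (rule Leib_0)
  next
    fix f' x' i' assume "finite (supp_int f')" "Leib f' g h"
    then show "Leib (f' + mon x' i') g h" by (intro Leib_add1 G mon_fin fin)
  qed
qed

lemma main: "hat_is_leibniz scale c l r \<longleftrightarrow> gd_dialg c l r"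
proof
  assume H: "hat_is_leibniz scale c l r"
  have L: "m (mon x i) (m (mon y j) (mon z k)) n =
     (m (m (mon x i) (mon y j)) (mon z k) + m (mon y j) (m (mon x i) (mon z k))) n" for x y z i j k n
    using H[unfolded hat_is_leibniz_def Let_def, rule_format, of "mon x i" "mon y j" "mon z k" n]
    by (simp add: mon_fin)
  have e0: "E0 x y z = 0" for x y z
    using L[of x 0 y 0 z 0 0] unfolding mon_leib by simp
  have e1: "E1 i j k x y z = 0" for x y z i j k
    using L[of x i y j z k "i+j+k-1"] unfolding mon_leib by simp
  have e2: "E2 i j k x y z = 0" for x y z i j k
    using L[of x i y j z k "i+j+k-2"] unfolding mon_leib by simp
  have "leibniz_alg c" unfolding leibniz_alg_def
  proof (intro allI)
    fix x y z show "c x (c y z) = c (c x y) z + c y (c x z)"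
      using e0[of x y z] unfolding E0_def by simp
  qed
  moreover have "novikov_dialg l r" unfolding nov_iff
  proof (intro allI conjI)
    fix x y z
    show "N1 x y z = 0" using e2[of 1 1 0 x y z] by (simp add: E2_expand)
    show "N2 x y z = 0" using e2[of 1 0 1 x y z] by (simp add: E2_expand)
    show "N3 x y z = 0" using e2[of 0 2 0 x y z] by (simp add: E2_expand)
    show "N4 x y z = 0" using e2[of 0 0 2 x y z] by (simp add: E2_expand)
    show "N5 x y z = 0" using e2[of 2 0 0 x y z] by (simp add: E2_expand)
    show "N6 x y z = 0" using e2[of 0 1 1 x y z] by (simp add: E2_expand)
  qed
  moreover have "\<forall>x y z. G1 x y z = 0 \<and> G2 x y z = 0 \<and> G3 x y z = 0"
  proof (intro allI conjI)
    fix x y z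
    show "G1 x y z = 0" using e1[of 1 0 0 x y z] by (simp add: E1_expand)
    show "G2 x y z = 0" using e1[of 0 1 0 x y z] by (simp add: E1_expand)
    show "G3 x y z = 0" using e1[of 0 0 1 x y z] by (simp add: E1_expand)
  qed
  ultimately show "gd_dialg c l r" unfolding gd_iff by blast
next
  assume "gd_dialg c l r"
  then have lc: "leibniz_alg c" and nv: "novikov_dialg l r"
    and gg: "\<forall>x y z. G1 x y z = 0 \<and> G2 x y z = 0 \<and> G3 x y z = 0"
    unfolding gd_iff by blast+
  have NN: "N1 x y z = 0 \<and> N2 x y z = 0 \<and> N3 x y z = 0 \<and> N4 x y z = 0 \<and> N5 x y z = 0 \<and> N6 x y z = 0" for x y z
    using nv unfolding nov_iff by blast
  have M: "Leib (mon x i) (mon y j) (mon z k)" for x i y j z k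
    unfolding Leib_def fun_eq_iff
  proof
    fix n
    have "E0 x y z = 0" using lc[unfolded leibniz_alg_def, rule_format, of x y z] unfolding E0_def by simp
    moreover have "E1 i j k x y z = 0" using gg by (simp add: E1_expand)
    moreover have "E2 i j k x y z = 0" using NN by (simp add: E2_expand)
    ultimately show "m (mon x i) (m (mon y j) (mon z k)) n =
     (m (m (mon x i) (mon y j)) (mon z k) + m (mon y j) (m (mon x i) (mon z k))) n"
      unfolding mon_leib by simp
  qed
  show "hat_is_leibniz scale c l r"
    unfolding hat_is_leibniz_def Let_def
  proof (intro allI impI)
    fix f g h :: "int \<Rightarrow> 'a" and n
    assume "finite (supp_int f) \<and> finite (supp_int g) \<and> finite (supp_int h)"
    then have "Leib f g h" using Leib_all[OF M] by blast
    then show "m f (m g h) n = m (m f g) h n + m g (m f h) n"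
      unfolding Leib_def by (simp add: fun_eq_iff)
  qed
qed

end

theorem proposition3p13:
  fixes scale :: "'k::field_char_0 \<Rightarrow> 'a::ab_group_add \<Rightarrow> 'a"
    and c l r :: "'a \<Rightarrow> 'a \<Rightarrow> 'a"
  assumes "vector_space scale"
    and "bilinear_op scale c" and "bilinear_op scale l" and "bilinear_op scale r"
  shows "hat_is_leibniz scale c l r \<longleftrightarrow> gd_dialg c l r"
proof -
  interpret hatctx scale c l r
    using assms by (simp add: hatctx_def hatctx_axioms_def)
  show ?thesis by (rule main)
qed

end
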